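(* Let $n$ be a positive integer, $Q \in \{L,R\}$ and $X \in \mathcal{RB}_n$. Suppose there is a positive integer $i$ with $XQ^i \notin \mathcal{RB}_n$, and let $i$ be the least such positive integer. Then $i \leq n$.
   Context: $L = \begin{pmatrix} 1 & 0 \\ 1 & 1\end{pmatrix}$, $R = \begin{pmatrix} 1 & 1 \\ 0 & 1\end{pmatrix}$. For a positive integer $n$, $\mathcal{D}_n$ is the set of $2\times 2$ matrices $A$ with nonnegative integer entries, $\det A = n$, and the greatest common divisor of all entries of $A$ equal to $1$. $\mathcal{RB}_n = \left\{ \begin{pmatrix} a & b \\ c & d\end{pmatrix} \in \mathcal{D}_n : a > c \text{ and } d > b\right\}$. *)

theory Defs
  imports Main
begin

text \<open>2x2 matrices with nonnegative integer entries, (a,b,c,d) stands for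
  the matrix with rows (a b) and (c d).\<close>
type_synonym mat2 = "nat \<times> nat \<times> nat \<times> nat"

fun mmul :: "mat2 \<Rightarrow> mat2 \<Rightarrow> mat2" where
  "mmul (a,b,c,d) (e,f,g,h) = (a*e + b*g, a*f + b*h, c*e + d*g, c*f + d*h)"

definition mid :: mat2 where "mid = (1,0,0,1)"

fun mpow :: "mat2 \<Rightarrow> nat \<Rightarrow> mat2" where
  "mpow M 0 = mid"
| "mpow M (Suc k) = mmul (mpow M k) M"

definition Lmat :: mat2 where "Lmat = (1,0,1,1)"
definition Rmat :: mat2 where "Rmat = (1,1,0,1)"

fun mdet :: "mat2 \<Rightarrow> int" where
  "mdet (a,b,c,d) = int a * int d - int b * int c"

fun mgcd :: "mat2 \<Rightarrow> nat" where
  "mgcd (a,b,c,d) = gcd (gcd a b) (gcd c d)"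

definition Dset :: "nat \<Rightarrow> mat2 set" where
  "Dset n = {M. mdet M = int n \<and> mgcd M = 1}"

definition RBset :: "nat \<Rightarrow> mat2 set" where
  "RBset n = {(a,b,c,d) | a b c d. (a,b,c,d) \<in> Dset n \<and> a > c \<and> d > b}"

end

theory Submission
  imports Defs
begin

lemma powR: "mpow Rmat j = (1, j, 0, 1)"
  by (induction j) (auto simp: mid_def Rmat_def)

lemma powL: "mpow Lmat j = (1, 0, j, 1)"
  by (induction j) (auto simp: mid_def Lmat_def)

lemma RB_iff: "(a,b,c,d) \<in> RBset n \<longleftrightarrow> int a * int d - int b * int c = int n \<and> gcd (gcd a b) (gcd c d) = 1 \<and> a > c \<and> d > b"
  by (auto simp: RBset_def Dset_def)

lemma caseR:
  fixes a b c d n :: nat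
  assumes "int a * int d - int b * int c = int n" "a > c" "d > b"
    and "d + n * c > b + n * a"
  shows False
proof -
  have "(int c + 1) * int d \<le> int a * int d"
    using assms(2) by (intro mult_right_mono) auto
  moreover have "(int c + 1) * int d - int b * int c = int c * (int d - int b) + int d"
    by (simp add: algebra_simps)
  moreover have "int c * (int d - int b) \<ge> 0" using assms(3) by simp
  ultimately have "int d - int b \<le> int n" using assms(1) by linarith
  moreover have "int n * (int a - int c) \<ge> int n * 1" using assms(2) by (intro mult_left_mono) auto
  moreover have "int (d + n * c) > int (b + n * a)"
    using assms(4) by linarith
  then have "int d + int n * int c > int b + int n * int a" by simp
  ultimately show False by (simp add: algebra_simps)
qed

lemma caseL:
  fixes a b c d n :: nat
  assumes "int a * int d - int b * int c = int n" "a > c" "d > b"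
    and "a + n * b > c + n * d"
  shows False
proof -
  have "int a * (int b + 1) \<le> int a * int d"
    using assms(3) by (intro mult_left_mono) auto
  moreover have "int a * (int b + 1) - int b * int c = int b * (int a - int c) + int a"
    by (simp add: algebra_simps)
  moreover have "int b * (int a - int c) \<ge> 0" using assms(2) by simp
  ultimately have "int a - int c \<le> int n" using assms(1) by linarith
  moreover have "int n * (int d - int b) \<ge> int n * 1" using assms(3) by (intro mult_left_mono) auto
  moreover have "int (a + n * b) > int (c + n * d)"
    using assms(4) by linarith
  then have "int a + int n * int b > int c + int n * int d" by simp
  ultimately show False by (simp add: algebra_simps)
qed

theorem lemma16:
  fixes n :: nat and Q X :: mat2 and i :: nat
  assumes "n > 0"
    and "Q \<in> {Lmat, Rmat}"
    and "X \<in> RBset n"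
    and "i > 0"
    and "mmul X (mpow Q i) \<notin> RBset n"
    and "\<forall>j. 0 < j \<and> j < i \<longrightarrow> mmul X (mpow Q j) \<in> RBset n"
  shows "i \<le> n"
proof (rule ccontr)
  assume "\<not> i \<le> n"
  then have m: "mmul X (mpow Q n) \<in> RBset n" using assms(1,6) by auto
  obtain a b c d where X: "X = (a,b,c,d)" by (cases X) auto
  have x: "int a * int d - int b * int c = int n" "a > c" "d > b"
    using assms(3) unfolding X RB_iff by auto
  show False
  proof (cases "Q = Rmat")
    case True
    then have "mmul (a,b,c,d) (1,n,0,1) \<in> RBset n" using m X powR by simp
    then show ?thesis using caseR[OF x] by (simp add: RB_iff algebra_simps)
  next
    case False
    then have "Q = Lmat" using assms(2) by auto
    then have "mmul (a,b,c,d) (1,0,n,1) \<in> RBset n" using m X powL by simp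
    then show ?thesis using caseL[OF x] by (simp add: RB_iff algebra_simps)
  qed
qed

end
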